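(* Let $\alpha\in(0,1)$ and let $U_i,U_i^0$, $i\in[m]$, be real numbers. Define $G_i=\mathrm{sign}(U_i^0-U_i)\cdot[\exp(-U_i)\vee\exp(-U_i^0)]$, $$\tau=\inf\Big\{\lambda\in\{|G_i|\}_{i=1}^m:\frac{1+\sum_{i=1}^m\mathbb{I}(G_i\le-\lambda)}{\sum_{i=1}^m\mathbb{I}(G_i\ge\lambda)}\le\alpha\Big\}$$ (with $\tau=\infty$ if the set is empty), $\mathcal{R}=\{i\in[m]:G_i\ge\tau\}$, and $e_i=\frac{m\,\mathbb{I}(G_i\ge\tau)}{1+\sum_{j=1}^m\mathbb{I}(G_j\le-\tau)}$. Let $e_{(1)}\ge\cdots\ge e_{(m)}$ be the order statistics of the $e_i$, $\hat k=\max\{i:ie_{(i)}/m\ge1/\alpha\}$, and $\mathcal{R}_{ebh}=\{i\in[m]:e_i\ge e_{(\hat k)}\}$ (the $e$-BH rejection set). Then $\mathcal{R}_{ebh}=\mathcal{R}$. *)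

theory Defs
  imports "HOL-Analysis.Analysis" "HOL-Library.Extended_Real"
begin

definition knock_G :: "(nat \<Rightarrow> real) \<Rightarrow> (nat \<Rightarrow> real) \<Rightarrow> nat \<Rightarrow> real" where
  "knock_G U U0 i = sgn (U0 i - U i) * max (exp (- U i)) (exp (- U0 i))"

text \<open>Threshold; the ratio (1 + N_minus)/N_plus \<le> alpha is read with the convention
  that a positive number divided by 0 is +infinity, i.e. as
  1 + N_minus \<le> alpha * N_plus. Inf of the empty set of ereals is +infinity.\<close>
definition knock_tau :: "real \<Rightarrow> nat \<Rightarrow> (nat \<Rightarrow> real) \<Rightarrow> ereal" where
  "knock_tau alpha m G = Inf {ereal \<bar>G i\<bar> | i. i \<in> {1..m} \<and>
      1 + real (card {j \<in> {1..m}. G j \<le> - \<bar>G i\<bar>})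
        \<le> alpha * real (card {j \<in> {1..m}. G j \<ge> \<bar>G i\<bar>})}"

definition knock_R :: "real \<Rightarrow> nat \<Rightarrow> (nat \<Rightarrow> real) \<Rightarrow> nat set" where
  "knock_R alpha m G = {i \<in> {1..m}. ereal (G i) \<ge> knock_tau alpha m G}"

definition knock_e :: "real \<Rightarrow> nat \<Rightarrow> (nat \<Rightarrow> real) \<Rightarrow> nat \<Rightarrow> real" where
  "knock_e alpha m G i =
     real m * (if ereal (G i) \<ge> knock_tau alpha m G then 1 else 0)
     / (1 + real (card {j \<in> {1..m}. ereal (G j) \<le> - knock_tau alpha m G}))"

text \<open>Order statistics e_(1) \<ge> ... \<ge> e_(m): e_(k) is the k-th largest (1-based).\<close>
definition order_stat_desc :: "nat \<Rightarrow> (nat \<Rightarrow> real) \<Rightarrow> nat \<Rightarrow> real" where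
  "order_stat_desc m e k = rev (sort (map e [1..<m+1])) ! (k - 1)"

definition eBH :: "real \<Rightarrow> nat \<Rightarrow> (nat \<Rightarrow> real) \<Rightarrow> nat set" where
  "eBH alpha m e =
    (let K = {k \<in> {1..m}. real k * order_stat_desc m e k / real m \<ge> 1 / alpha}
     in if K = {} then {}
        else {i \<in> {1..m}. e i \<ge> order_stat_desc m e (Max K)})"

end

theory Submission
  imports Defs "HOL-Library.Multiset"
begin

lemma os_two:
  fixes e :: "nat \<Rightarrow> real"
  assumes e: "\<And>i. e i = (if P i then c else 0)" and c: "0 \<le> c" and k: "1 \<le> k" "k \<le> m"
  shows "order_stat_desc m e k = (if k \<le> card {i\<in>{1..m}. P i} then c else 0)"
proof -
  define xs where "xs = [1..<m+1]"
  define r where "r = length (filter P xs)"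
  have r: "r = card {i\<in>{1..m}. P i}"
    unfolding r_def xs_def by (subst distinct_length_filter) (auto intro: arg_cong[where f=card])
  have lenxs: "length xs = m" by (simp add: xs_def)
  have lr: "length (filter (\<lambda>x. \<not> P x) xs) = m - r"
    using sum_length_filter_compl[of P xs] lenxs r_def by simp
  have m1: "map e (filter P xs) = replicate r c"
    by (simp add: r_def e map_replicate_const[symmetric] cong: map_cong)
  have m2: "map e (filter (\<lambda>x. \<not> P x) xs) = replicate (m - r) 0"
    by (simp add: lr[symmetric] e map_replicate_const[symmetric] cong: map_cong)
  have ms: "mset (replicate (m - r) 0 @ replicate r c) = mset (map e xs)"
  proof -
    have "mset (map e xs) = mset (map e (filter P xs)) + mset (map e (filter (\<lambda>x. \<not> P x) xs))"
      by (metis image_mset_union multiset_partition mset_filter mset_map)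
    then show ?thesis using m1 m2 by (simp add: add.commute)
  qed
  have srt: "sorted (replicate (m - r) 0 @ replicate r c)"
    using c by (auto simp: sorted_append)
  have "sort (map e xs) = replicate (m - r) 0 @ replicate r c"
    by (rule properties_for_sort[OF ms srt])
  then have "rev (sort (map e xs)) = replicate r c @ replicate (m - r) 0" by simp
  moreover have "r \<le> m" using lr lenxs sum_length_filter_compl[of P xs] r_def by simp
  ultimately show ?thesis
    unfolding order_stat_desc_def xs_def[symmetric] r[symmetric]
    using k by (auto simp: nth_append)
qed

lemma main:
  fixes alpha :: real and m :: nat and G :: "nat \<Rightarrow> real"
  assumes a: "0 < alpha"
  shows "eBH alpha m (knock_e alpha m G) = knock_R alpha m G"
proof -
  define S where "S = {ereal \<bar>G i\<bar> | i. i \<in> {1..m} \<and>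
      1 + real (card {j \<in> {1..m}. G j \<le> - \<bar>G i\<bar>})
        \<le> alpha * real (card {j \<in> {1..m}. G j \<ge> \<bar>G i\<bar>})}"
  have tau: "knock_tau alpha m G = Inf S" unfolding knock_tau_def S_def ..
  define P where "P i = (ereal (G i) \<ge> knock_tau alpha m G)" for i
  define N where "N = card {j \<in> {1..m}. ereal (G j) \<le> - knock_tau alpha m G}"
  define c where "c = real m / (1 + real N)"
  have c0: "0 \<le> c" by (simp add: c_def)
  have e: "knock_e alpha m G i = (if P i then c else 0)" for i
    by (simp add: knock_e_def P_def N_def c_def)
  have R: "knock_R alpha m G = {i\<in>{1..m}. P i}" by (simp add: knock_R_def P_def)
  have os: "\<And>k. 1 \<le> k \<Longrightarrow> k \<le> m \<Longrightarrow> order_stat_desc m (knock_e alpha m G) k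
      = (if k \<le> card {i\<in>{1..m}. P i} then c else 0)"
    by (rule os_two[OF e c0])
  show ?thesis
  proof (cases "S = {}")
    case True
    then have "knock_tau alpha m G = \<infinity>" by (simp add: tau top_ereal_def)
    then have nP: "\<not> P i" for i by (simp add: P_def)
    have K: "{k \<in> {1..m}. real k * order_stat_desc m (knock_e alpha m G) k / real m \<ge> 1 / alpha} = {}"
      using os a nP by auto
    show ?thesis unfolding eBH_def Let_def K R using nP by simp
  next
    case False
    have fin: "finite S"
    proof (rule finite_subset)
      show "S \<subseteq> (\<lambda>i. ereal \<bar>G i\<bar>) ` {1..m}" unfolding S_def by auto
    qed simp
    have "Inf S \<in> S"
      by (rule finite_Inf_in[OF fin False]) (auto simp: inf_min min_def)
    then obtain i0 where i0: "i0 \<in> {1..m}" and t: "knock_tau alpha m G = ereal \<bar>G i0\<bar>"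
      and cond: "1 + real (card {j \<in> {1..m}. G j \<le> - \<bar>G i0\<bar>})
        \<le> alpha * real (card {j \<in> {1..m}. G j \<ge> \<bar>G i0\<bar>})"
      unfolding tau S_def by auto
    define r where "r = card {i\<in>{1..m}. P i}"
    have Nq: "N = card {j \<in> {1..m}. G j \<le> - \<bar>G i0\<bar>}"
      unfolding N_def t by simp
    have rq: "r = card {j \<in> {1..m}. G j \<ge> \<bar>G i0\<bar>}"
      unfolding r_def P_def t by simp
    have cond': "1 + real N \<le> alpha * real r" using cond Nq rq by simp
    have r1: "r \<ge> 1" using cond' a by (cases r) auto
    have rm: "r \<le> m" unfolding r_def
      by (rule order_trans[OF card_mono[of "{1..m}"]]) auto
    have m0: "m > 0" using r1 rm by simp
    have cpos: "c > 0" using m0 by (simp add: c_def)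
    define K where "K = {k \<in> {1..m}. real k * order_stat_desc m (knock_e alpha m G) k / real m \<ge> 1 / alpha}"
    have Ksub: "K \<subseteq> {1..r}"
    proof
      fix k assume k: "k \<in> K"
      show "k \<in> {1..r}"
      proof (rule ccontr)
        assume "k \<notin> {1..r}"
        with k have "order_stat_desc m (knock_e alpha m G) k = 0"
          using os[of k] by (auto simp: K_def r_def)
        with k a show False by (auto simp: K_def)
      qed
    qed
    have rK: "r \<in> K"
    proof -
      have "real r * c / real m = real r / (1 + real N)" using m0 by (simp add: c_def)
      moreover have "real r / (1 + real N) \<ge> 1 / alpha"
        using cond' a by (simp add: field_simps)
      ultimately show ?thesis using os[of r] r1 rm by (simp add: K_def r_def)
    qed
    have MK: "Max K = r"
      using Ksub rK by (intro Max_eqI) (auto intro: finite_subset)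
    have Kne: "K \<noteq> {}" using rK by auto
    have osr: "order_stat_desc m (knock_e alpha m G) r = c" using os[of r] r1 rm r_def by simp
    show ?thesis
      unfolding eBH_def Let_def K_def[symmetric] MK osr R using Kne cpos e
      by (auto simp: not_le[symmetric])
  qed
qed

theorem proposition3:
  fixes alpha :: real and m :: nat and U U0 :: "nat \<Rightarrow> real"
  assumes "0 < alpha" and "alpha < 1"
  defines "G \<equiv> knock_G U U0"
  shows "eBH alpha m (knock_e alpha m G) = knock_R alpha m G"
  using main[OF assms(1)] .

end
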